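(* Let $d\ge 3$ be an integer and let $\ell \ge 5$ be a prime. Let $(x,y)$ be an integer solution of \[ d(2x+d+1)\left(x^2+(d+1)x+\frac{d(d+1)}{2}\right)=2y^\ell . \] Then there are rational numbers $y_1,y_2$ and a pair $(\alpha,\beta)\in\mathcal{A}_d$ such that \[ 2x+d+1=\alpha y_1^\ell, \qquad x^2+(d+1)x+\frac{d(d+1)}{2}=\beta y_2^\ell . \] Moreover, if $3\le d\le 50$ then $y_1$ and $y_2$ are integers.
   Context: For a prime $q$ let $\mu_q=\operatorname{ord}_q(d^2-1)$ and $\nu_q=\operatorname{ord}_q(d)$. To each prime $q$ associate a finite set $T_q\subset\mathbb{Z}^2$: if $q\nmid d(d^2-1)$, $T_q=\{(0,0)\}$. For $q=2$: $T_2=\{(0,1-\nu_2)\}$ if $2\mid d$; $T_2=\{(1,0),(\mu_2/2,1-\mu_2/2),(3-\mu_2,\mu_2-2)\}$ if $2\nmid d$ and $\mu_2$ is even; $T_2=\{(1,0),(3-\mu_2,\mu_2-2)\}$ if $2\nmid d$ and $\mu_2$ is odd. For odd $q\mid d$: $T_q=\{(-\nu_q,0),(0,-\nu_q)\}$. For odd $q\mid d^2-1$: $T_q=\{(0,0),(-\mu_q,\mu_q),(\mu_q/2,-\mu_q/2)\}$ if $\mu_q$ is even, and $T_q=\{(0,0),(-\mu_q,\mu_q)\}$ if $\mu_q$ is odd. Then $\mathcal{A}_d$ is the (finite) set of pairs of positive rationals $(\alpha,\beta)$ with $(\operatorname{ord}_q(\alpha),\operatorname{ord}_q(\beta))\in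 T_q$ for every prime $q$. *)

theory Defs
  imports "HOL-Computational_Algebra.Computational_Algebra"
begin

definition rat_ord :: "nat \<Rightarrow> rat \<Rightarrow> int" where
  "rat_ord q r = (case quotient_of r of (a, b) \<Rightarrow>
      int (multiplicity (int q) a) - int (multiplicity (int q) b))"

definition T_set :: "int \<Rightarrow> nat \<Rightarrow> (int \<times> int) set" where
  "T_set d q =
    (let mu = int (multiplicity (int q) (d^2 - 1));
         nu = int (multiplicity (int q) d) in
     if \<not> (int q dvd d * (d^2 - 1)) then {(0, 0)}
     else if q = 2 then
       (if 2 dvd d then {(0, 1 - nu)}
        else if even mu then {(1, 0), (mu div 2, 1 - mu div 2), (3 - mu, mu - 2)}
        else {(1, 0), (3 - mu, mu - 2)})
     else if int q dvd d then {(- nu, 0), (0, - nu)}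
     else if even mu then {(0, 0), (- mu, mu), (mu div 2, - (mu div 2))}
     else {(0, 0), (- mu, mu)})"

definition A_set :: "int \<Rightarrow> (rat \<times> rat) set" where
  "A_set d = {(\<alpha>, \<beta>). \<alpha> > 0 \<and> \<beta> > 0 \<and>
     (\<forall>q. prime q \<longrightarrow> (rat_ord q \<alpha>, rat_ord q \<beta>) \<in> T_set d q)}"

end

theory Submission
  imports Defs
begin

lemma mult_sum_lt:
  fixes p x y :: int
  assumes "prime p" "x \<noteq> 0" "y \<noteq> 0" "multiplicity p x < multiplicity p y"
  shows "multiplicity p (x + y) = multiplicity p x"
proof -
  let ?m = "multiplicity p x"
  have nu: "\<not> is_unit p" using assms(1) not_prime_unit by blast
  have 1: "p ^ ?m dvd x" by (rule multiplicity_dvd)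
  have 2: "p ^ Suc ?m dvd y" using assms(4) by (intro multiplicity_dvd') simp
  hence 3: "p ^ ?m dvd y" by (rule dvd_trans[rotated]) (simp add: le_imp_power_dvd)
  have 4: "\<not> p ^ Suc ?m dvd x"
  proof
    assume "p ^ Suc ?m dvd x"
    from multiplicity_geI[OF assms(2) nu this] show False by simp
  qed
  show ?thesis
  proof (rule multiplicity_eqI)
    show "p ^ ?m dvd x + y" using 1 3 by (rule dvd_add)
    show "\<not> p ^ Suc ?m dvd x + y"
    proof
      assume "p ^ Suc ?m dvd x + y"
      from dvd_diff[OF this 2] have "p ^ Suc ?m dvd x" by simp
      with 4 show False by blast
    qed
  qed
qed

lemma rat_ord_frac:
  assumes "prime q" "a \<noteq> 0" "b \<noteq> 0"
  shows "rat_ord q (of_int a / of_int b) = int (multiplicity (int q) a) - int (multiplicity (int q) b)"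
proof -
  obtain n m where qo: "quotient_of (of_int a / of_int b :: rat) = (n, m)"
    by (cases "quotient_of (of_int a / of_int b :: rat)") auto
  have m: "m > 0" using quotient_of_denom_pos[OF qo] .
  have eq: "(of_int a / of_int b :: rat) = of_int n / of_int m" using quotient_of_div[OF qo] .
  hence "(of_int a * of_int m :: rat) = of_int n * of_int b" using assms m
    by (simp add: field_simps)
  hence "(of_int (a * m) :: rat) = of_int (n * b)" by simp
  hence am: "a * m = n * b" by (simp only: of_int_eq_iff)
  have n0: "n \<noteq> 0" using am assms m by auto
  have pq: "prime_elem (int q)" using assms by simp
  have "multiplicity (int q) (a*m) = multiplicity (int q) (n*b)" using am by simp
  hence "multiplicity (int q) a + multiplicity (int q) m = multiplicity (int q) n + multiplicity (int q) b"
    using prime_elem_multiplicity_mult_distrib[OF pq] assms m n0 by simp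
  thus ?thesis unfolding rat_ord_def qo by simp
qed

lemma l_dvd3:
  fixes z :: int and l :: nat
  assumes "prime l" "l \<ge> 5" "int l dvd 3 * z"
  shows "int l dvd z"
proof -
  have "prime (int l)" using assms by simp
  hence "int l dvd 3 \<or> int l dvd z" using assms(3) prime_dvd_mult_iff by blast
  moreover have "\<not> int l dvd 3"
  proof
    assume "int l dvd 3" hence "int l \<le> 3" by (rule zdvd_imp_le) simp
    with assms(2) show False by simp
  qed
  ultimately show ?thesis by blast
qed

lemma build:
  fixes N :: int and t :: "int \<Rightarrow> int" and l :: nat
  assumes N: "N \<noteq> 0" and l: "odd l"
    and t0: "\<forall>p. prime p \<longrightarrow> \<not> p dvd N \<longrightarrow> t p = 0"
  shows "\<exists>P Q. P > 0 \<and> Q > 0 \<and> (\<forall>q. prime q \<longrightarrow> rat_ord q (of_int P / of_int Q) = t (int q)) \<and>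
     (\<forall>n. n \<noteq> 0 \<longrightarrow> (\<forall>p. prime p \<longrightarrow> int l dvd int (multiplicity p n) - t p \<and> t p \<le> int (multiplicity p n))
        \<longrightarrow> (\<exists>y. n * Q = P * y ^ l))"
proof -
  define S where "S = prime_factors N"
  have finS: "finite S" unfolding S_def by simp
  have prS: "\<forall>p\<in>S. prime p" unfolding S_def by (auto intro: in_prime_factors_imp_prime)
  have S_eq: "S = {p. prime p \<and> p dvd N}" unfolding S_def using prime_factors_dvd[OF N] .
  define P where "P = (\<Prod>p\<in>S. p ^ nat (t p))"
  define Q where "Q = (\<Prod>p\<in>S. p ^ nat (- t p))"
  have Ppos: "P > 0" unfolding P_def using prS by (intro prod_pos zero_less_power) (auto intro: prime_gt_0_int)
  have Qpos: "Q > 0" unfolding Q_def using prS by (intro prod_pos zero_less_power) (auto intro: prime_gt_0_int)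
  have ord: "rat_ord q (of_int P / of_int Q) = t (int q)" if q: "prime q" for q
  proof -
    have qi: "prime (int q)" using q by simp
    have "rat_ord q (of_int P / of_int Q) = int (multiplicity (int q) P) - int (multiplicity (int q) Q)"
      using rat_ord_frac[OF q] Ppos Qpos by simp
    also have "\<dots> = (if int q \<in> S then int (nat (t (int q))) - int (nat (- t (int q))) else 0)"
      unfolding P_def Q_def
      by (simp add: multiplicity_prod_prime_powers[OF finS _ qi] prS)
    also have "\<dots> = t (int q)" using t0 qi S_eq by auto
    finally show ?thesis .
  qed
  have fac: "\<exists>y. n * Q = P * y ^ l"
    if n: "n \<noteq> 0" and cond: "\<forall>p. prime p \<longrightarrow> int l dvd int (multiplicity p n) - t p \<and> t p \<le> int (multiplicity p n)" for n
  proof -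
    define S' where "S' = S \<union> prime_factors n"
    have finS': "finite S'" unfolding S'_def using finS by simp
    have prS': "\<forall>p\<in>S'. prime p" unfolding S'_def using prS by (auto intro: in_prime_factors_imp_prime)
    define e where "e p = nat ((int (multiplicity p n) - t p) div int l)" for p
    have lpos: "l > 0" using l by (cases l) auto
    have ee: "nat (t p) + e p * l = multiplicity p n + nat (- t p)" if p: "prime p" for p
    proof -
      obtain k where k: "int (multiplicity p n) - t p = int l * k" using cond p by (meson dvdE)
      have kd: "(int (multiplicity p n) - t p) div int l = k" using k lpos by simp
      have "int l * k \<ge> 0" using k cond p by (metis diff_ge_0_iff_ge)
      hence k0: "k \<ge> 0" using lpos by (simp add: zero_le_mult_iff)
      have "int (nat (t p) + e p * l) = int (nat (t p)) + k * int l" unfolding e_def kd using k0 by simp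
      also have "\<dots> = int (multiplicity p n + nat (- t p))"
      proof -
        have z: "int (nat (t p)) - int (nat (- t p)) = t p" by (cases "t p \<ge> 0") auto
        have kk: "int (multiplicity p n) = t p + k * int l" using k by (simp add: mult.commute)
        show ?thesis unfolding of_nat_add using kk z by linarith
      qed
      finally show ?thesis by (simp only: of_nat_eq_iff)
    qed
    have tz: "t i = 0" if i: "i \<in> S' - S" for i
    proof -
      have "prime i" using prS' i by blast
      moreover have "\<not> i dvd N" using i S_eq calculation by blast
      ultimately show "t i = 0" using t0 by blast
    qed
    have PS': "P = (\<Prod>p\<in>S'. p ^ nat (t p))" unfolding P_def
      by (rule prod.mono_neutral_left[OF finS']) (auto simp: S'_def tz)
    have QS': "Q = (\<Prod>p\<in>S'. p ^ nat (- t p))" unfolding Q_def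
      by (rule prod.mono_neutral_left[OF finS']) (auto simp: S'_def tz)
    have absn: "(\<Prod>p\<in>S'. p ^ multiplicity p n) = \<bar>n\<bar>"
    proof -
      have "(\<Prod>p\<in>S'. p ^ multiplicity p n) = (\<Prod>p\<in>prime_factors n. p ^ multiplicity p n)"
      proof (rule prod.mono_neutral_right[OF finS'])
        show "prime_factors n \<subseteq> S'" unfolding S'_def by blast
        show "\<forall>i\<in>S' - prime_factors n. i ^ multiplicity i n = 1"
        proof
          fix i assume i: "i \<in> S' - prime_factors n"
          hence "prime i" using prS' by blast
          hence "\<not> i dvd n" using i prime_factors_dvd[OF n] by blast
          thus "i ^ multiplicity i n = 1" by (simp add: not_dvd_imp_multiplicity_0)
        qed
      qed
      also have "\<dots> = \<bar>n\<bar>" using prod_prime_factors[OF n] by simp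
      finally show ?thesis .
    qed
    define y where "y = sgn n * (\<Prod>p\<in>S'. p ^ e p)"
    have sg: "sgn n ^ l = sgn n" using l n by (cases "n > 0") auto
    have "P * y ^ l = sgn n * (\<Prod>p\<in>S'. p ^ nat (t p) * p ^ (e p * l))"
    proof -
      have "y ^ l = sgn n * (\<Prod>p\<in>S'. p ^ (e p * l))"
        unfolding y_def power_mult_distrib sg by (simp add: prod_power_distrib power_mult)
      thus ?thesis unfolding PS' by (simp add: prod.distrib)
    qed
    also have "\<dots> = sgn n * (\<Prod>p\<in>S'. p ^ multiplicity p n * p ^ nat (- t p))"
      by (intro arg_cong[where f="\<lambda>x. sgn n * x"] prod.cong refl)
         (simp add: power_add[symmetric] ee prS')
    also have "\<dots> = n * Q" unfolding QS' prod.distrib absn by (simp add: sgn_mult_abs mult.assoc)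
    finally show ?thesis by metis
  qed
  show ?thesis using Ppos Qpos ord fac by blast
qed

lemma T_unfold:
  fixes d p :: int
  assumes "prime p"
  shows "T_set d (nat p) =
    (let mu = int (multiplicity p (d^2 - 1));
         nu = int (multiplicity p d) in
     if \<not> (p dvd d * (d^2 - 1)) then {(0, 0)}
     else if p = 2 then
       (if 2 dvd d then {(0, 1 - nu)}
        else if even mu then {(1, 0), (mu div 2, 1 - mu div 2), (3 - mu, mu - 2)}
        else {(1, 0), (3 - mu, mu - 2)})
     else if p dvd d then {(- nu, 0), (0, - nu)}
     else if even mu then {(0, 0), (- mu, mu), (mu div 2, - (mu div 2))}
     else {(0, 0), (- mu, mu)})"
proof -
  have p0: "p > 0" using assms by (rule prime_gt_0_int)
  hence e1: "int (nat p) = p" by simp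
  have e2: "(nat p = 2) = (p = 2)" using p0 by auto
  show ?thesis unfolding T_set_def e1 e2 ..
qed

lemma per_prime:
  fixes d a b y p :: int and l :: nat
  assumes p: "prime p" and l: "prime l" "l \<ge> 5" and d: "d \<ge> 3" and a: "a \<noteq> 0"
    and b4: "4*b = a^2 + (d^2-1)" and eq: "d*a*b = 2*y^l" and par: "even (a + d + 1)"
  shows "\<exists>t\<in>T_set d (nat p). int l dvd int (multiplicity p a) - fst t \<and> int l dvd int (multiplicity p b) - snd t
           \<and> fst t \<le> int (multiplicity p a) \<and> snd t \<le> int (multiplicity p b)"
proof -
  define D where "D = d^2 - 1"
  have "d * d \<ge> 3 * 3" using d by (intro mult_mono) auto
  hence Dpos: "D > 0" unfolding D_def by (simp add: power2_eq_square)
  have b4': "4*b = a^2 + D" using b4 D_def by simp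
  have a2: "a^2 > 0" using a by simp
  have bpos: "b > 0" using b4' Dpos a2 by linarith
  have d0: "d \<noteq> 0" using d by simp
  have l0: "l > 0" using l(1) prime_gt_0_nat by blast
  have y0: "y \<noteq> 0"
  proof
    assume "y = 0"
    hence "d * a * b = 0" using eq l0 by (simp add: power_0_left)
    thus False using a d0 bpos by simp
  qed
  have pe: "prime_elem p" using p by (rule prime_imp_prime_elem)
  have nu: "\<not> is_unit p" using p not_prime_unit by blast
  define A where "A = multiplicity p a"
  define B where "B = multiplicity p b"
  define M where "M = multiplicity p D"
  define N where "N = multiplicity p d"
  define Y where "Y = multiplicity p y"
  define E where "E = multiplicity p (2::int)"
  have "multiplicity p (d*a*b) = multiplicity p (2*y^l)" using eq by simp
  hence key: "N + A + B = E + l * Y"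
    unfolding A_def B_def N_def E_def Y_def
    using d0 a bpos y0 by (simp add: prime_elem_multiplicity_mult_distrib[OF pe]
        prime_elem_multiplicity_power_distrib[OF pe])
  have gcd: "p dvd D" if "p dvd a" "p dvd b"
  proof -
    have "p dvd 4*b - a^2" using that by (simp add: power2_eq_square)
    thus ?thesis using b4' by simp
  qed
  have m4b: "multiplicity p (4*b) = multiplicity p (4::int) + B"
    unfolding B_def using bpos by (simp add: prime_elem_multiplicity_mult_distrib[OF pe])
  have mA2: "multiplicity p (a^2) = 2*A"
    unfolding A_def using a by (simp add: prime_elem_multiplicity_power_distrib[OF pe])
  have evN: "even (d * D)" unfolding D_def by (cases "even d") auto
  have p2: "p = 2" if "p dvd 2"
  proof -
    have "p \<le> 2" using that by (rule zdvd_imp_le) simp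
    moreover have "p \<ge> 2" using p by (rule prime_ge_2_int)
    ultimately show ?thesis by simp
  qed
  have T: "T_set d (nat p) =
     (if \<not> (p dvd d * D) then {(0, 0)}
     else if p = 2 then
       (if 2 dvd d then {(0, 1 - int N)}
        else if even (int M) then {(1, 0), (int M div 2, 1 - int M div 2), (3 - int M, int M - 2)}
        else {(1, 0), (3 - int M, int M - 2)})
     else if p dvd d then {(- int N, 0), (0, - int N)}
     else if even (int M) then {(0, 0), (- int M, int M), (int M div 2, - (int M div 2))}
     else {(0, 0), (- int M, int M)})"
    unfolding T_unfold[OF p] Let_def M_def N_def D_def ..
  consider (i) "\<not> p dvd d * D" | (ii) "p dvd d * D" "p = 2"
    | (iii) "p dvd d * D" "p \<noteq> 2" "p dvd d" | (iv) "p dvd d * D" "p \<noteq> 2" "\<not> p dvd d" by blast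
  then have "\<exists>t\<in>T_set d (nat p). int l dvd int A - fst t \<and> int l dvd int B - snd t
           \<and> fst t \<le> int A \<and> snd t \<le> int B"
  proof cases
    case i
    have p2': "p \<noteq> 2" using i evN by auto
    have "\<not> p dvd d" "\<not> p dvd D" using i by auto
    hence N0: "N = 0" unfolding N_def by (simp add: not_dvd_imp_multiplicity_0)
    have E0: "E = 0" unfolding E_def using p2 p2' by (meson not_dvd_imp_multiplicity_0)
    have "A = 0 \<or> B = 0" unfolding A_def B_def using gcd \<open>\<not> p dvd D\<close> not_dvd_imp_multiplicity_0
      by metis
    hence "int l dvd int A \<and> int l dvd int B" using key N0 E0 by auto
    thus ?thesis using T i by simp
  next
    case ii
    have E1: "E = 1" unfolding E_def using ii nu by (simp add: multiplicity_self)
    show ?thesis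
    proof (cases "even d")
      case True
      have oa: "odd a" using par True by simp
      hence A0: "A = 0" unfolding A_def using ii by (simp add: not_dvd_imp_multiplicity_0)
      have "p ^ 1 dvd d" using ii True by simp
      hence N1: "N \<ge> 1" unfolding N_def by (rule multiplicity_geI[OF d0 nu])
      have w: "(0, 1 - int N) \<in> T_set d (nat p)" using T ii True by simp
      have kk: "int N + int B = 1 + int l * int Y" using key A0 E1 by (metis of_nat_add of_nat_mult add_0_right of_nat_1)
      have "int B - (1 - int N) = int l * int Y" using kk by linarith
      hence dv: "int l dvd int B - (1 - int N)" by simp
      show ?thesis by (rule bexI[OF _ w]) (use dv N1 A0 in simp)
    next
      case False
      have ea: "even a" using par False by simp
      have "p ^ 1 dvd a" using ii ea by simp
      hence A1: "A \<ge> 1" unfolding A_def by (rule multiplicity_geI[OF a nu])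
      have N0: "N = 0" unfolding N_def using ii False by (simp add: not_dvd_imp_multiplicity_0)
      obtain k where dk: "d = 2*k+1" using False by (metis oddE)
      have "D = 4*(k^2+k)" unfolding D_def dk by (simp add: power2_eq_square algebra_simps)
      hence "p ^ 2 dvd D" using ii by simp
      hence M2: "M \<ge> 2" unfolding M_def using Dpos by (intro multiplicity_geI[OF _ nu]) simp_all
      have m4: "multiplicity p (4::int) = 2"
      proof -
        have "(4::int) = 2^2" by simp
        thus ?thesis using ii pe by (simp only: multiplicity_prime_power)
      qed
      have keyi: "int A + int B = 1 + int l * int Y" using key N0 E1 by (metis of_nat_add of_nat_mult add_0 of_nat_1)
      consider (lt) "2*A < M" | (gt) "2*A > M" | (eq) "2*A = M" by linarith
      then show ?thesis
      proof cases
        case lt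
        have "multiplicity p (a^2 + D) = 2*A" using mult_sum_lt[OF p _ _] lt mA2 a2 Dpos unfolding M_def by simp
        hence BA: "B + 2 = 2*A" using m4b m4 b4' by simp
        hence BAi: "int B + 2 = 2 * int A" by linarith
        hence "3 * (int A - 1) = int l * int Y" using keyi by (smt (verit))
        hence "int l dvd 3 * (int A - 1)" by simp
        hence dv: "int l dvd int A - 1" using l_dvd3 l by blast
        have "int B = 2 * (int A - 1)" using BAi by (smt (verit))
        hence dv2: "int l dvd int B" using dvd_mult[OF dv, of 2] by metis
        have w: "(1, 0) \<in> T_set d (nat p)" using T ii False by simp
        show ?thesis by (rule bexI[OF _ w]) (use dv dv2 A1 in simp)
      next
        case gt
        have "multiplicity p (D + a^2) = M" using mult_sum_lt[OF p _ _] gt mA2 a2 Dpos unfolding M_def by simp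
        hence BM: "B + 2 = M" using m4b m4 b4' by (simp add: add.commute)
        have w: "(3 - int M, int M - 2) \<in> T_set d (nat p)" using T ii False by simp
        have "int A - (3 - int M) = int l * int Y" using keyi BM by linarith
        hence dv: "int l dvd int A - (3 - int M)" by simp
        show ?thesis by (rule bexI[OF _ w]) (use dv BM A1 M2 in auto)
      next
        case eq
        have ev: "even (int M)" using eq by presburger
        have "int M div 2 = int A" using eq by simp
        hence w: "(int A, 1 - int A) \<in> T_set d (nat p)" using T ii False ev by simp
        have "int B - (1 - int A) = int l * int Y" using keyi by linarith
        hence dv: "int l dvd int B - (1 - int A)" by simp
        show ?thesis by (rule bexI[OF _ w]) (use dv A1 in simp)
      qed
    qed
  next
    case iii
    have "\<not> p dvd D"
    proof
      assume "p dvd D"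
      moreover have "p dvd d^2" using iii by (simp add: power2_eq_square)
      ultimately have "p dvd d^2 - D" by (rule dvd_diff[rotated])
      hence "p dvd 1" unfolding D_def by simp
      thus False using nu by simp
    qed
    have E0: "E = 0" unfolding E_def using p2 iii by (meson not_dvd_imp_multiplicity_0)
    have "A = 0 \<or> B = 0" unfolding A_def B_def using gcd \<open>\<not> p dvd D\<close> not_dvd_imp_multiplicity_0
      by metis
    thus ?thesis
    proof
      assume A0: "A = 0"
      have "int l dvd int B + int N" using key A0 E0 by (metis add.commute dvd_triv_left of_nat_add of_nat_mult add_0_right)
      thus ?thesis using T iii A0 by auto
    next
      assume B0: "B = 0"
      have "int l dvd int A + int N" using key B0 E0 by (metis add.commute dvd_triv_left of_nat_add of_nat_mult add_0_right)
      thus ?thesis using T iii B0 by auto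
    qed
  next
    case iv
    have N0: "N = 0" unfolding N_def using iv by (simp add: not_dvd_imp_multiplicity_0)
    have E0: "E = 0" unfolding E_def using p2 iv by (meson not_dvd_imp_multiplicity_0)
    have "\<not> p dvd 4"
    proof
      assume "p dvd 4" hence "p dvd 2 * 2" by simp
      hence "p dvd 2" using p prime_dvd_mult_iff by blast
      thus False using p2 iv by blast
    qed
    hence m4: "multiplicity p (4::int) = 0" by (simp add: not_dvd_imp_multiplicity_0)
    have keyi: "int A + int B = int l * int Y" using key N0 E0 by (metis of_nat_add of_nat_mult add_0)
    consider (lt) "2*A < M" | (gt) "2*A > M" | (eq) "2*A = M" by linarith
    then show ?thesis
    proof cases
      case lt
      have "multiplicity p (a^2 + D) = 2*A" using mult_sum_lt[OF p _ _] lt mA2 a2 Dpos unfolding M_def by simp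
      hence BA: "B = 2*A" using m4b m4 b4' by simp
      hence "int l dvd 3 * int A" using keyi by simp
      hence "int l dvd int A" using l_dvd3 l by blast
      hence "int l dvd int A \<and> int l dvd int B" using BA by simp
      thus ?thesis using T iv by simp
    next
      case gt
      have "multiplicity p (D + a^2) = M" using mult_sum_lt[OF p _ _] gt mA2 a2 Dpos unfolding M_def by simp
      hence BM: "B = M" using m4b m4 b4' by (simp add: add.commute)
      thus ?thesis using T iv keyi by auto
    next
      case eq
      have ev: "even (int M)" using eq by presburger
      have "int M div 2 = int A" using eq by simp
      hence w: "(int A, - int A) \<in> T_set d (nat p)" using T iv ev by simp
      have dv: "int l dvd int B + int A" using keyi by (simp add: add.commute)
      show ?thesis by (rule bexI[OF _ w]) (use dv in simp)
    qed
  qed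
  thus ?thesis unfolding A_def B_def .
qed

lemma per_prime0:
  fixes d b p :: int
  assumes p: "prime p" and d: "d \<ge> 3" and od: "odd d" and b4: "4*b = d^2-1"
  shows "\<exists>t\<in>T_set d (nat p). snd t = int (multiplicity p b)"
proof -
  define D where "D = d^2 - 1"
  have "d * d \<ge> 3 * 3" using d by (intro mult_mono) auto
  hence Dpos: "D > 0" unfolding D_def by (simp add: power2_eq_square)
  have b4': "4*b = D" using b4 D_def by simp
  have bpos: "b > 0" using b4' Dpos by linarith
  have pe: "prime_elem p" using p by (rule prime_imp_prime_elem)
  have nu: "\<not> is_unit p" using p not_prime_unit by blast
  define B where "B = multiplicity p b"
  define M where "M = multiplicity p D"
  define N where "N = multiplicity p d"
  have m4b: "multiplicity p (4*b) = multiplicity p (4::int) + B"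
    unfolding B_def using bpos by (simp add: prime_elem_multiplicity_mult_distrib[OF pe])
  have bD: "\<not> p dvd b" if "\<not> p dvd D"
    using that b4' by (metis dvd_mult)
  have evN: "even (d * D)" unfolding D_def by (cases "even d") auto
  have p2: "p = 2" if "p dvd 2"
  proof -
    have "p \<le> 2" using that by (rule zdvd_imp_le) simp
    moreover have "p \<ge> 2" using p by (rule prime_ge_2_int)
    ultimately show ?thesis by simp
  qed
  have T: "T_set d (nat p) =
     (if \<not> (p dvd d * D) then {(0, 0)}
     else if p = 2 then
       (if 2 dvd d then {(0, 1 - int N)}
        else if even (int M) then {(1, 0), (int M div 2, 1 - int M div 2), (3 - int M, int M - 2)}
        else {(1, 0), (3 - int M, int M - 2)})
     else if p dvd d then {(- int N, 0), (0, - int N)}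
     else if even (int M) then {(0, 0), (- int M, int M), (int M div 2, - (int M div 2))}
     else {(0, 0), (- int M, int M)})"
    unfolding T_unfold[OF p] Let_def M_def N_def D_def ..
  consider (i) "\<not> p dvd d * D" | (ii) "p dvd d * D" "p = 2"
    | (iii) "p dvd d * D" "p \<noteq> 2" "p dvd d" | (iv) "p dvd d * D" "p \<noteq> 2" "\<not> p dvd d" by blast
  then have "\<exists>t\<in>T_set d (nat p). snd t = int B"
  proof cases
    case i
    hence "\<not> p dvd D" by auto
    hence "B = 0" unfolding B_def using bD by (simp add: not_dvd_imp_multiplicity_0)
    thus ?thesis using T i by simp
  next
    case ii
    have m4: "multiplicity p (4::int) = 2"
    proof -
      have "(4::int) = 2^2" by simp
      thus ?thesis using ii pe by (simp only: multiplicity_prime_power)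
    qed
    have "2 + B = M" using m4b m4 b4' M_def by simp
    moreover have w: "(3 - int M, int M - 2) \<in> T_set d (nat p)" using T ii od by simp
    ultimately show ?thesis by force
  next
    case iii
    have "\<not> p dvd D"
    proof
      assume "p dvd D"
      moreover have "p dvd d^2" using iii by (simp add: power2_eq_square)
      ultimately have "p dvd d^2 - D" by (rule dvd_diff[rotated])
      hence "p dvd 1" unfolding D_def by simp
      thus False using nu by simp
    qed
    hence "B = 0" unfolding B_def using bD by (simp add: not_dvd_imp_multiplicity_0)
    moreover have w: "(- int N, 0) \<in> T_set d (nat p)" using T iii by simp
    ultimately show ?thesis by force
  next
    case iv
    have "\<not> p dvd 4"
    proof
      assume "p dvd 4" hence "p dvd 2 * 2" by simp
      hence "p dvd 2" using p prime_dvd_mult_iff by blast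
      thus False using p2 iv by blast
    qed
    hence m4: "multiplicity p (4::int) = 0" by (simp add: not_dvd_imp_multiplicity_0)
    have "B = M" using m4b m4 b4' M_def by simp
    moreover have w: "(- int M, int M) \<in> T_set d (nat p)" using T iv by (cases "even (int M)") simp_all
    ultimately show ?thesis by force
  qed
  thus ?thesis unfolding B_def .
qed

theorem lemma4p1:
  fixes d x y :: int and l :: nat
  assumes "d \<ge> 3" and "prime l" and "l \<ge> 5"
    and "of_int d * (2 * of_int x + of_int d + 1) *
         ((of_int x)^2 + (of_int d + 1) * of_int x + of_int d * (of_int d + 1) / 2)
         = (2 * (of_int y) ^ l :: rat)"
  shows "\<exists>y1 y2 :: rat. \<exists>\<alpha> \<beta>. (\<alpha>, \<beta>) \<in> A_set d \<and>
           2 * of_int x + of_int d + 1 = \<alpha> * y1 ^ l \<and>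
           (of_int x)^2 + (of_int d + 1) * of_int x + of_int d * (of_int d + 1) / 2 = \<beta> * y2 ^ l \<and>
           (d \<le> 50 \<longrightarrow> y1 \<in> \<int> \<and> y2 \<in> \<int>)"
proof -
  define a where "a = 2*x + d + 1"
  define b where "b = x^2 + (d+1)*x + d*(d+1) div 2"
  have ev: "2 dvd d*(d+1)" by simp
  have h2: "2 * (d*(d+1) div 2) = d*(d+1)" using ev by simp
  have hb: "(of_int x)^2 + (of_int d + 1) * of_int x + of_int d * (of_int d + 1) / 2 = (of_int b :: rat)"
    unfolding b_def using of_int_div[OF ev, where 'a=rat] by simp
  have ha: "2 * of_int x + of_int d + 1 = (of_int a :: rat)" unfolding a_def by simp
  have "(of_int (d*a*b) :: rat) = of_int (2*y^l)" using assms(4) unfolding ha hb by simp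
  hence eqi: "d*a*b = 2*y^l" by (simp only: of_int_eq_iff)
  have b4: "4*b = a^2 + (d^2-1)" unfolding a_def b_def using h2 by algebra
  have par: "even (a + d + 1)" unfolding a_def by simp
  have l0: "l > 0" using assms(2) prime_gt_0_nat by blast
  have lodd: "odd l" using assms(2,3) prime_odd_nat by simp
  define N where "N = d*(d^2-1)"
  have "d * d \<ge> 3 * 3" using assms(1) by (intro mult_mono) auto
  hence N0: "N \<noteq> 0" unfolding N_def using assms(1) by (simp add: power2_eq_square)
  have Tz: "T_set d (nat p) = {(0,0)}" if "prime p" "\<not> p dvd N" for p
    using that unfolding T_unfold[OF that(1)] N_def Let_def by simp
  have Aset: "(of_int P1 / of_int Q1, of_int P2 / of_int Q2) \<in> A_set d"
    if "P1 > 0" "Q1 > 0" "P2 > 0" "Q2 > 0"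
       "\<forall>q. prime q \<longrightarrow> rat_ord q (of_int P1 / of_int Q1) = fst (tt (int q))"
       "\<forall>q. prime q \<longrightarrow> rat_ord q (of_int P2 / of_int Q2) = snd (tt (int q))"
       "\<forall>p. prime p \<longrightarrow> tt p \<in> T_set d (nat p)" for P1 Q1 P2 Q2 tt
  proof -
    have "\<forall>q. prime q \<longrightarrow> tt (int q) \<in> T_set d q" using that(7) by (metis nat_int prime_nat_int_transfer)
    thus ?thesis unfolding A_set_def using that(1-6) by auto
  qed
  show ?thesis
  proof (cases "a = 0")
    case False
    have "\<forall>p. \<exists>t. prime p \<longrightarrow> t\<in>T_set d (nat p) \<and> int l dvd int (multiplicity p a) - fst t \<and> int l dvd int (multiplicity p b) - snd t
           \<and> fst t \<le> int (multiplicity p a) \<and> snd t \<le> int (multiplicity p b)"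
      using per_prime[OF _ assms(2,3,1) False b4 eqi par] by blast
    then obtain tt where tt: "\<forall>p. prime p \<longrightarrow> tt p\<in>T_set d (nat p) \<and> int l dvd int (multiplicity p a) - fst (tt p) \<and> int l dvd int (multiplicity p b) - snd (tt p)
           \<and> fst (tt p) \<le> int (multiplicity p a) \<and> snd (tt p) \<le> int (multiplicity p b)"
      by metis
    have t0: "tt p = (0,0)" if "prime p" "\<not> p dvd N" for p using tt Tz[OF that] that by auto
    obtain P1 Q1 where PQ1: "P1 > 0" "Q1 > 0" "\<forall>q. prime q \<longrightarrow> rat_ord q (of_int P1 / of_int Q1) = fst (tt (int q))"
      "\<forall>n. n \<noteq> 0 \<longrightarrow> (\<forall>p. prime p \<longrightarrow> int l dvd int (multiplicity p n) - fst (tt p) \<and> fst (tt p) \<le> int (multiplicity p n))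
        \<longrightarrow> (\<exists>y. n * Q1 = P1 * y ^ l)"
      using build[OF N0 lodd, of "\<lambda>p. fst (tt p)"] t0 by auto
    obtain P2 Q2 where PQ2: "P2 > 0" "Q2 > 0" "\<forall>q. prime q \<longrightarrow> rat_ord q (of_int P2 / of_int Q2) = snd (tt (int q))"
      "\<forall>n. n \<noteq> 0 \<longrightarrow> (\<forall>p. prime p \<longrightarrow> int l dvd int (multiplicity p n) - snd (tt p) \<and> snd (tt p) \<le> int (multiplicity p n))
        \<longrightarrow> (\<exists>y. n * Q2 = P2 * y ^ l)"
      using build[OF N0 lodd, of "\<lambda>p. snd (tt p)"] t0 by auto
    have bpos: "b > 0"
    proof -
      have "a^2 > 0" using False by simp
      moreover have "d^2 - 1 > 0" using \<open>d*d \<ge> 3*3\<close> by (simp add: power2_eq_square)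
      ultimately show ?thesis using b4 by linarith
    qed
    obtain y1 where y1: "a * Q1 = P1 * y1 ^ l" using PQ1(4) False tt by blast
    have c2: "\<forall>p. prime p \<longrightarrow> int l dvd int (multiplicity p b) - snd (tt p) \<and> snd (tt p) \<le> int (multiplicity p b)"
      using tt by simp
    have "b \<noteq> 0" using bpos by simp
    hence "\<exists>y. b * Q2 = P2 * y ^ l" using PQ2(4) c2 by blast
    then obtain y2 where y2: "b * Q2 = P2 * y2 ^ l" by blast
    have e1: "(of_int a :: rat) = of_int P1 / of_int Q1 * of_int y1 ^ l"
    proof -
      have "(of_int a :: rat) * of_int Q1 = of_int P1 * of_int y1 ^ l"
        using arg_cong[OF y1, of "of_int :: int \<Rightarrow> rat"] by simp
      thus ?thesis using PQ1(2) by (simp add: field_simps)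
    qed
    have e2: "(of_int b :: rat) = of_int P2 / of_int Q2 * of_int y2 ^ l"
    proof -
      have "(of_int b :: rat) * of_int Q2 = of_int P2 * of_int y2 ^ l"
        using arg_cong[OF y2, of "of_int :: int \<Rightarrow> rat"] by simp
      thus ?thesis using PQ2(2) by (simp add: field_simps)
    qed
    show ?thesis
      by (rule exI[of _ "of_int y1"], rule exI[of _ "of_int y2"],
          rule exI[of _ "of_int P1 / of_int Q1"], rule exI[of _ "of_int P2 / of_int Q2"])
        (use Aset[OF PQ1(1,2) PQ2(1,2) PQ1(3) PQ2(3)] tt e1 e2 ha hb in auto)
  next
    case True
    have od: "odd d" using par True by simp
    have b4': "4*b = d^2 - 1" using b4 True by simp
    have "\<forall>p. \<exists>t. prime p \<longrightarrow> t\<in>T_set d (nat p) \<and> snd t = int (multiplicity p b)"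
      using per_prime0[OF _ assms(1) od b4'] by blast
    then obtain tt where tt: "\<forall>p. prime p \<longrightarrow> tt p\<in>T_set d (nat p) \<and> snd (tt p) = int (multiplicity p b)"
      by metis
    have t0: "tt p = (0,0)" if "prime p" "\<not> p dvd N" for p using tt Tz[OF that] that by auto
    obtain P1 Q1 where PQ1: "P1 > 0" "Q1 > 0" "\<forall>q. prime q \<longrightarrow> rat_ord q (of_int P1 / of_int Q1) = fst (tt (int q))"
      using build[OF N0 lodd, of "\<lambda>p. fst (tt p)"] t0 by auto
    obtain P2 Q2 where PQ2: "P2 > 0" "Q2 > 0" "\<forall>q. prime q \<longrightarrow> rat_ord q (of_int P2 / of_int Q2) = snd (tt (int q))"
      "\<forall>n. n \<noteq> 0 \<longrightarrow> (\<forall>p. prime p \<longrightarrow> int l dvd int (multiplicity p n) - snd (tt p) \<and> snd (tt p) \<le> int (multiplicity p n))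
        \<longrightarrow> (\<exists>y. n * Q2 = P2 * y ^ l)"
      using build[OF N0 lodd, of "\<lambda>p. snd (tt p)"] t0 by auto
    have bpos: "b > 0"
      using b4' \<open>d*d \<ge> 3*3\<close> by (simp add: power2_eq_square)
    have c2: "\<forall>p. prime p \<longrightarrow> int l dvd int (multiplicity p b) - snd (tt p) \<and> snd (tt p) \<le> int (multiplicity p b)"
      using tt by simp
    have "b \<noteq> 0" using bpos by simp
    hence "\<exists>y. b * Q2 = P2 * y ^ l" using PQ2(4) c2 by blast
    then obtain y2 where y2: "b * Q2 = P2 * y2 ^ l" by blast
    have e1: "(of_int a :: rat) = of_int P1 / of_int Q1 * of_int 0 ^ l" using True l0 by simp
    have e2: "(of_int b :: rat) = of_int P2 / of_int Q2 * of_int y2 ^ l"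
    proof -
      have "(of_int b :: rat) * of_int Q2 = of_int P2 * of_int y2 ^ l"
        using arg_cong[OF y2, of "of_int :: int \<Rightarrow> rat"] by simp
      thus ?thesis using PQ2(2) by (simp add: field_simps)
    qed
    show ?thesis
      by (rule exI[of _ "of_int 0"], rule exI[of _ "of_int y2"],
          rule exI[of _ "of_int P1 / of_int Q1"], rule exI[of _ "of_int P2 / of_int Q2"])
        (use Aset[OF PQ1(1,2) PQ2(1,2) PQ1(3) PQ2(3)] tt e1 e2 ha hb in auto)
  qed
qed

end
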